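(* Let $\Omega=\{r<0\}\subset\mathbb C^2$ with $r$ a smooth defining function that is plurisubharmonic on the boundary. Let $X$ be a smooth real-valued function, $P=1+X$, $K\in\mathbb R$, and $\rho=r(1+Kr+X)$. If $p\in b\Omega$ is a weakly pseudoconvex point (i.e. $\mathcal L_r(p)=0$) and the complex Hessian of $\rho$ is positive semidefinite at $p$, then $$B_P(p)=\big(4\,\mathrm{Re}[r_zP_{\bar z}]\,\mathrm{Re}[r_wP_{\bar w}]-|r_zP_{\bar w}+r_{\bar w}P_z|^2\big)\big|_p=0.$$
   Context: Coordinates $(z,w)$ on $\mathbb C^2$; subscripts denote partial derivatives; $b\Omega=\{r=0\}$ with $\nabla r\neq0$ there. For real $C^2$ $f$, $H_f=\begin{pmatrix} f_{z\bar z}& f_{z\bar w}\\ f_{\bar z w}& f_{w\bar w}\end{pmatrix}$, acting on $V,W\in\mathbb C^2$ by $H_f(V,W)=f_{z\bar z}V_1\bar W_1+f_{w\bar w}V_2\bar W_2+f_{z\bar w}V_1\bar W_2+f_{\bar z w}V_2\bar W_1$. $L_r$ is the vector $(r_w,-r_z)$ and the Levi form is $\mathcal L_r(p)=H_r(L_r,L_r)(p)$. "$r$ plurisubharmonic on the boundary" means $H_r(p)$ is positive semidefinite for all $p\in b\Omega$. *)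

theory Defs
  imports "HOL-Analysis.Analysis"
begin

text \<open>Points of C^2 are pairs (z,w) :: complex \<times> complex, viewed as a real vector space.\<close>

fun Ck :: "nat \<Rightarrow> ('a::real_normed_vector \<Rightarrow> 'b::real_normed_vector) \<Rightarrow> bool" where
  "Ck 0 f = continuous_on UNIV f"
| "Ck (Suc k) f = ((\<forall>x. f differentiable (at x)) \<and>
      (\<forall>v. Ck k (\<lambda>x. frechet_derivative f (at x) v)))"

definition smooth :: "('a::real_normed_vector \<Rightarrow> 'b::real_normed_vector) \<Rightarrow> bool" where
  "smooth f \<longleftrightarrow> (\<forall>k. Ck k f)"

definition dirD :: "(complex \<times> complex \<Rightarrow> complex) \<Rightarrow> complex \<times> complex \<Rightarrow> complex \<times> complex \<Rightarrow> complex" where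
  "dirD g v p = frechet_derivative g (at p) v"

text \<open>Wirtinger derivatives: with z = x1 + i y1, w = x2 + i y2.\<close>
definition Dz :: "(complex \<times> complex \<Rightarrow> complex) \<Rightarrow> complex \<times> complex \<Rightarrow> complex" where
  "Dz g p = (dirD g (1,0) p - \<i> * dirD g (\<i>,0) p) / 2"
definition Dzbar :: "(complex \<times> complex \<Rightarrow> complex) \<Rightarrow> complex \<times> complex \<Rightarrow> complex" where
  "Dzbar g p = (dirD g (1,0) p + \<i> * dirD g (\<i>,0) p) / 2"
definition Dw :: "(complex \<times> complex \<Rightarrow> complex) \<Rightarrow> complex \<times> complex \<Rightarrow> complex" where
  "Dw g p = (dirD g (0,1) p - \<i> * dirD g (0,\<i>) p) / 2"
definition Dwbar :: "(complex \<times> complex \<Rightarrow> complex) \<Rightarrow> complex \<times> complex \<Rightarrow> complex" where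
  "Dwbar g p = (dirD g (0,1) p + \<i> * dirD g (0,\<i>) p) / 2"

definition cf :: "(complex \<times> complex \<Rightarrow> real) \<Rightarrow> complex \<times> complex \<Rightarrow> complex" where
  "cf f = (\<lambda>p. complex_of_real (f p))"

definition cHess :: "(complex \<times> complex \<Rightarrow> real) \<Rightarrow> complex \<times> complex \<Rightarrow> complex \<times> complex \<Rightarrow> complex \<times> complex \<Rightarrow> complex" where
  "cHess f p V W =
     Dz (Dzbar (cf f)) p * fst V * cnj (fst W)
   + Dw (Dwbar (cf f)) p * snd V * cnj (snd W)
   + Dz (Dwbar (cf f)) p * fst V * cnj (snd W)
   + Dzbar (Dw (cf f)) p * snd V * cnj (fst W)"

definition hess_psd :: "(complex \<times> complex \<Rightarrow> real) \<Rightarrow> complex \<times> complex \<Rightarrow> bool" where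
  "hess_psd f p \<longleftrightarrow> (\<forall>V. Im (cHess f p V V) = 0 \<and> 0 \<le> Re (cHess f p V V))"

definition Lvec :: "(complex \<times> complex \<Rightarrow> real) \<Rightarrow> complex \<times> complex \<Rightarrow> complex \<times> complex" where
  "Lvec r p = (Dw (cf r) p, - Dz (cf r) p)"

definition levi :: "(complex \<times> complex \<Rightarrow> real) \<Rightarrow> complex \<times> complex \<Rightarrow> complex" where
  "levi r p = cHess r p (Lvec r p) (Lvec r p)"

definition BP :: "(complex \<times> complex \<Rightarrow> real) \<Rightarrow> (complex \<times> complex \<Rightarrow> real) \<Rightarrow> complex \<times> complex \<Rightarrow> real" where
  "BP r P p =
     4 * Re (Dz (cf r) p * Dzbar (cf P) p) * Re (Dw (cf r) p * Dwbar (cf P) p)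
     - (cmod (Dz (cf r) p * Dwbar (cf P) p + Dwbar (cf r) p * Dz (cf P) p))\<^sup>2"

end

theory Submission imports Defs begin

definition W :: "complex \<times> complex \<Rightarrow> complex \<times> complex \<Rightarrow> complex \<Rightarrow> (complex \<times> complex \<Rightarrow> complex) \<Rightarrow> complex \<times> complex \<Rightarrow> complex" where
  "W a1 a2 s g p = (dirD g a1 p + s * dirD g a2 p) / 2"

lemma Dz_W: "Dz = W (1,0) (\<i>,0) (-\<i>)" by (intro ext) (simp add: Dz_def W_def)
lemma Dzbar_W: "Dzbar = W (1,0) (\<i>,0) (\<i>)" by (intro ext) (simp add: Dzbar_def W_def)
lemma Dw_W: "Dw = W (0,1) (0,\<i>) (-\<i>)" by (intro ext) (simp add: Dw_def W_def)
lemma Dwbar_W: "Dwbar = W (0,1) (0,\<i>) (\<i>)" by (intro ext) (simp add: Dwbar_def W_def)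

lemma dirD_cf:
  assumes "g differentiable at x"
  shows "dirD (cf g) u x = of_real (frechet_derivative g (at x) u)"
proof -
  have "(cf g has_derivative (\<lambda>u. of_real (frechet_derivative g (at x) u))) (at x)"
    unfolding cf_def using has_derivative_of_real assms frechet_derivative_works by blast
  then show ?thesis unfolding dirD_def by (metis frechet_derivative_at)
qed

lemma W_cf:
  assumes "g differentiable at x"
  shows "W a1 a2 s (cf g) x = (of_real (frechet_derivative g (at x) a1) + s * of_real (frechet_derivative g (at x) a2)) / 2"
  using assms by (simp add: W_def dirD_cf)

lemma aux4: "(x::complex) = (A/2 + s*(B/2))/2 \<Longrightarrow> x = (A + s*B)/4"
  by (simp add: field_simps)

lemma WW_cf:
  assumes d: "\<forall>x. g differentiable at x"
    and d1: "(\<lambda>x. frechet_derivative g (at x) b1) differentiable at p"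
    and d2: "(\<lambda>x. frechet_derivative g (at x) b2) differentiable at p"
  shows "W a1 a2 s (W b1 b2 t (cf g)) p =
     ((of_real (frechet_derivative (\<lambda>x. frechet_derivative g (at x) b1) (at p) a1)
       + t * of_real (frechet_derivative (\<lambda>x. frechet_derivative g (at x) b2) (at p) a1))
     + s * (of_real (frechet_derivative (\<lambda>x. frechet_derivative g (at x) b1) (at p) a2)
       + t * of_real (frechet_derivative (\<lambda>x. frechet_derivative g (at x) b2) (at p) a2))) / 4"
proof -
  define G1 where "G1 = (\<lambda>x. frechet_derivative g (at x) b1)"
  define G2 where "G2 = (\<lambda>x. frechet_derivative g (at x) b2)"
  have eq: "W b1 b2 t (cf g) = (\<lambda>x. (of_real (G1 x) + t * of_real (G2 x)) / 2)"
    by (rule ext) (simp add: W_cf d G1_def G2_def)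
  have h1: "(G1 has_derivative frechet_derivative G1 (at p)) (at p)"
    using d1 frechet_derivative_works G1_def by blast
  have h2: "(G2 has_derivative frechet_derivative G2 (at p)) (at p)"
    using d2 frechet_derivative_works G2_def by blast
  have "((\<lambda>x. (of_real (G1 x) + t * of_real (G2 x)) / 2) has_derivative
     (\<lambda>u. (of_real (frechet_derivative G1 (at p) u) + t * of_real (frechet_derivative G2 (at p) u)) / 2)) (at p)"
  proof -
    have a: "((\<lambda>x. of_real (G2 x)) has_derivative (\<lambda>u. of_real (frechet_derivative G2 (at p) u))) (at p)"
      using has_derivative_of_real[OF h2] .
    have b: "((\<lambda>x. t * of_real (G2 x)) has_derivative (\<lambda>u. t * of_real (frechet_derivative G2 (at p) u))) (at p)"
      using has_derivative_mult_right[OF a] .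
    have c: "((\<lambda>x. of_real (G1 x) + t * of_real (G2 x)) has_derivative (\<lambda>u. of_real (frechet_derivative G1 (at p) u) + t * of_real (frechet_derivative G2 (at p) u))) (at p)"
      using has_derivative_add[OF has_derivative_of_real[OF h1] b] .
    show ?thesis using bounded_linear.has_derivative[OF bounded_linear_divide c] .
  qed
  note hd = this
  have "\<And>u. dirD (W b1 b2 t (cf g)) u p = (of_real (frechet_derivative G1 (at p) u) + t * of_real (frechet_derivative G2 (at p) u)) / 2"
  proof -
    fix u
    have fd: "frechet_derivative (\<lambda>x. (of_real (G1 x) + t * of_real (G2 x)) / 2) (at p) =
     (\<lambda>u. (of_real (frechet_derivative G1 (at p) u) + t * of_real (frechet_derivative G2 (at p) u)) / 2)"
      using frechet_derivative_at[OF hd] by simp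
    show "dirD (W b1 b2 t (cf g)) u p = (of_real (frechet_derivative G1 (at p) u) + t * of_real (frechet_derivative G2 (at p) u)) / 2"
      unfolding dirD_def eq fd by (rule refl)
  qed
  then have "W a1 a2 s (W b1 b2 t (cf g)) p = ((of_real (frechet_derivative G1 (at p) a1) + t * of_real (frechet_derivative G2 (at p) a1)) / 2
     + s * ((of_real (frechet_derivative G1 (at p) a2) + t * of_real (frechet_derivative G2 (at p) a2)) / 2)) / 2"
    by (simp only: W_def)
  then show ?thesis unfolding G1_def G2_def by (rule aux4)
qed

lemma smooth_C2:
  assumes "smooth f"
  shows "\<forall>x. f differentiable at x" "\<forall>v x. (\<lambda>y. frechet_derivative f (at y) v) differentiable at x"
proof -
  have "Ck (Suc (Suc 0)) f" using assms smooth_def by blast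
  then show "\<forall>x. f differentiable at x" "\<forall>v x. (\<lambda>y. frechet_derivative f (at y) v) differentiable at x"
    by auto
qed

lemma S_rho:
  fixes r X :: "complex \<times> complex \<Rightarrow> real"
  assumes rd: "\<forall>x. r differentiable at x" and rd2: "\<forall>v x. (\<lambda>y. frechet_derivative r (at y) v) differentiable at x"
    and Xd: "\<forall>x. X differentiable at x" and Xd2: "\<forall>v x. (\<lambda>y. frechet_derivative X (at y) v) differentiable at x"
    and rp: "r p = 0"
  shows "(\<forall>x. (\<lambda>q. r q * (1 + K * r q + X q)) differentiable at x)
    \<and> (\<forall>v. (\<lambda>y. frechet_derivative (\<lambda>q. r q * (1 + K * r q + X q)) (at y) v) differentiable at p)
    \<and> (\<forall>u v. frechet_derivative (\<lambda>y. frechet_derivative (\<lambda>q. r q * (1 + K * r q + X q)) (at y) v) (at p) u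
        = (1 + X p) * frechet_derivative (\<lambda>y. frechet_derivative r (at y) v) (at p) u
          + frechet_derivative r (at p) u * (K * frechet_derivative r (at p) v + frechet_derivative X (at p) v)
          + frechet_derivative r (at p) v * (K * frechet_derivative r (at p) u + frechet_derivative X (at p) u))"
proof -
  define Rr where "Rr x = frechet_derivative r (at x)" for x
  define RX where "RX x = frechet_derivative X (at x)" for x
  define Sr where "Sr u v = frechet_derivative (\<lambda>y. Rr y v) (at p) u" for u v
  define SX where "SX u v = frechet_derivative (\<lambda>y. RX y v) (at p) u" for u v
  have hr: "(r has_derivative Rr x) (at x)" for x unfolding Rr_def using rd frechet_derivative_works by blast
  have hX: "(X has_derivative RX x) (at x)" for x unfolding RX_def using Xd frechet_derivative_works by blast
  have hrv: "((\<lambda>y. Rr y v) has_derivative (\<lambda>u. Sr u v)) (at p)" for v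
  proof -
    have "(\<lambda>y. Rr y v) differentiable at p" using rd2 unfolding Rr_def by blast
    from iffD1[OF frechet_derivative_works this] show ?thesis unfolding Sr_def .
  qed
  have hXv: "((\<lambda>y. RX y v) has_derivative (\<lambda>u. SX u v)) (at p)" for v
  proof -
    have "(\<lambda>y. RX y v) differentiable at p" using Xd2 unfolding RX_def by blast
    from iffD1[OF frechet_derivative_works this] show ?thesis unfolding SX_def .
  qed
  have hQ: "((\<lambda>q. 1 + K * r q + X q) has_derivative (\<lambda>h. 0 + K * Rr x h + RX x h)) (at x)" for x
    by (rule has_derivative_add[OF has_derivative_add[OF has_derivative_const has_derivative_mult_right[OF hr]] hX])
  have hrho: "((\<lambda>q. r q * (1 + K * r q + X q)) has_derivative
      (\<lambda>h. r x * (0 + K * Rr x h + RX x h) + Rr x h * (1 + K * r x + X x))) (at x)" for x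
    by (rule has_derivative_mult[OF hr hQ])
  have d1: "\<forall>x. (\<lambda>q. r q * (1 + K * r q + X q)) differentiable at x"
    using hrho differentiable_def by blast
  have fd: "frechet_derivative (\<lambda>q. r q * (1 + K * r q + X q)) (at y) v
      = r y * (K * Rr y v + RX y v) + Rr y v * (1 + K * r y + X y)" for y v
    using frechet_derivative_at[OF hrho[of y], symmetric] by simp
  have hG: "((\<lambda>y. r y * (K * Rr y v + RX y v) + Rr y v * (1 + K * r y + X y)) has_derivative
     (\<lambda>u. (r p * (K * Sr u v + SX u v) + Rr p u * (K * Rr p v + RX p v))
        + (Rr p v * (0 + K * Rr p u + RX p u) + Sr u v * (1 + K * r p + X p)))) (at p)" for v
    by (rule has_derivative_add[OF has_derivative_mult[OF hr has_derivative_add[OF has_derivative_mult_right[OF hrv] hXv]]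
           has_derivative_mult[OF hrv hQ]])
  have fdeq: "(\<lambda>y. frechet_derivative (\<lambda>q. r q * (1 + K * r q + X q)) (at y) v)
     = (\<lambda>y. r y * (K * Rr y v + RX y v) + Rr y v * (1 + K * r y + X y))" for v
    using fd by auto
  show ?thesis
  proof (intro conjI allI)
    show "(\<lambda>q. r q * (1 + K * r q + X q)) differentiable at x" for x using d1 by blast
    show "(\<lambda>y. frechet_derivative (\<lambda>q. r q * (1 + K * r q + X q)) (at y) v) differentiable at p" for v
      unfolding fdeq using hG differentiable_def by blast
    show "frechet_derivative (\<lambda>y. frechet_derivative (\<lambda>q. r q * (1 + K * r q + X q)) (at y) v) (at p) u
        = (1 + X p) * frechet_derivative (\<lambda>y. frechet_derivative r (at y) v) (at p) u
          + frechet_derivative r (at p) u * (K * frechet_derivative r (at p) v + frechet_derivative X (at p) v)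
          + frechet_derivative r (at p) v * (K * frechet_derivative r (at p) u + frechet_derivative X (at p) u)" for u v
      unfolding fdeq frechet_derivative_at[OF hG[of v], symmetric]
      using rp by (simp add: Rr_def RX_def Sr_def algebra_simps)
  qed
qed


lemma WW_rho:
  fixes r X :: "complex \<times> complex \<Rightarrow> real"
  assumes rs: "smooth r" and Xs: "smooth X" and rp: "r p = 0"
  shows "W a1 a2 s (W b1 b2 t (cf (\<lambda>q. r q * (1 + K * r q + X q)))) p =
     of_real (1 + X p) * W a1 a2 s (W b1 b2 t (cf r)) p
   + W a1 a2 s (cf r) p * (of_real K * W b1 b2 t (cf r) p + W b1 b2 t (cf X) p)
   + W b1 b2 t (cf r) p * (of_real K * W a1 a2 s (cf r) p + W a1 a2 s (cf X) p)"
proof -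
  note r1 = smooth_C2(1)[OF rs] and r2 = smooth_C2(2)[OF rs]
  note X1 = smooth_C2(1)[OF Xs] and X2 = smooth_C2(2)[OF Xs]
  note SR = S_rho[OF r1 r2 X1 X2 rp, of K]
  have e1: "W a1 a2 s (W b1 b2 t (cf (\<lambda>q. r q * (1 + K * r q + X q)))) p =
     ((of_real (frechet_derivative (\<lambda>y. frechet_derivative (\<lambda>q. r q * (1 + K * r q + X q)) (at y) b1) (at p) a1)
       + t * of_real (frechet_derivative (\<lambda>y. frechet_derivative (\<lambda>q. r q * (1 + K * r q + X q)) (at y) b2) (at p) a1))
     + s * (of_real (frechet_derivative (\<lambda>y. frechet_derivative (\<lambda>q. r q * (1 + K * r q + X q)) (at y) b1) (at p) a2)
       + t * of_real (frechet_derivative (\<lambda>y. frechet_derivative (\<lambda>q. r q * (1 + K * r q + X q)) (at y) b2) (at p) a2))) / 4"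
    using SR by (intro WW_cf; blast)
  have e2: "W a1 a2 s (W b1 b2 t (cf r)) p =
     ((of_real (frechet_derivative (\<lambda>y. frechet_derivative r (at y) b1) (at p) a1)
       + t * of_real (frechet_derivative (\<lambda>y. frechet_derivative r (at y) b2) (at p) a1))
     + s * (of_real (frechet_derivative (\<lambda>y. frechet_derivative r (at y) b1) (at p) a2)
       + t * of_real (frechet_derivative (\<lambda>y. frechet_derivative r (at y) b2) (at p) a2))) / 4"
    using r1 r2 by (intro WW_cf; blast)
  show ?thesis
    unfolding e1 e2 W_cf[OF r1[rule_format]] W_cf[OF X1[rule_format]] SR[THEN conjunct2, THEN conjunct2, rule_format]
    by (simp add: field_simps)
qed

lemma alg1: fixes a b l :: complex
  shows "4 * Re (a * cnj (l*a)) * Re (b * cnj (l*b)) - (cmod (a * cnj (l*b) + cnj b * (l*a)))^2 = 0"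
  unfolding cmod_power2 by (simp add: power2_eq_square algebra_simps)

lemma alg: fixes a b c d :: complex
  assumes ab: "(a, b) \<noteq> (0,0)" and e: "c * b = d * a"
  shows "4 * Re (a * cnj c) * Re (b * cnj d) - (cmod (a * cnj d + cnj b * c))^2 = 0"
proof (cases "a = 0")
  case True
  then have "b \<noteq> 0" using ab by auto
  then have "c = 0" using e True by simp
  then show ?thesis using True by simp
next
  case False
  define l where "l = c / a"
  have c: "c = l * a" using False l_def by simp
  have d: "d = l * b" using e False c by (simp add: field_simps) 
  show ?thesis unfolding c d by (rule alg1)
qed

lemma quad0: fixes a e :: real
  assumes "\<And>t. 0 \<le> t * a + t^2 * e"
  shows "a = 0"
proof -
  define m where "m = \<bar>e\<bar> + 1"
  have m: "m > 0" by (simp add: m_def)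
  have "0 \<le> (-a/m) * a + (-a/m)^2 * e" by (rule assms)
  also have "\<dots> \<le> - (a^2) / m + (a^2) * \<bar>e\<bar> / (m^2)"
  proof -
    have "(-a/m)^2 * e \<le> (-a/m)^2 * \<bar>e\<bar>" by (intro mult_left_mono) auto
    then show ?thesis using m by (simp add: power2_eq_square field_simps)
  qed
  also have "\<dots> = - (a^2) / (m^2)" proof -
    have em: "\<bar>e\<bar> = m - 1" by (simp add: m_def)
    show ?thesis unfolding em using m by (simp add: power2_eq_square field_simps)
  qed
  finally have "a^2 / m^2 \<le> 0" by simp
  then have "a^2 \<le> 0" using m by (simp add: divide_le_0_iff)
  then show ?thesis by simp
qed

lemma quadC: fixes Z E :: complex
  assumes h: "\<And>s::real. Im (of_real s * Z + of_real (s^2) * E) = 0 \<and> 0 \<le> Re (of_real s * Z + of_real (s^2) * E)"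
  shows "Z = 0"
proof -
  have "\<And>s::real. 0 \<le> s * Re Z + s^2 * Re E" using h by simp
  then have r: "Re Z = 0" by (rule quad0)
  have "Im Z + Im E = 0" using h[of 1] by simp
  moreover have "- Im Z + Im E = 0" using h[of "-1"] by simp
  ultimately have "Im Z = 0" by simp
  then show ?thesis using r by (simp add: complex_eq_iff)
qed

lemma sesq_expand:
  "cHess f p (fst L + t * fst V, snd L + t * snd V) (fst L + t * fst V, snd L + t * snd V)
   = cHess f p L L + cnj t * cHess f p L V + t * cHess f p V L + t * cnj t * cHess f p V V"
  unfolding cHess_def by (simp add: algebra_simps)

lemma psd_null:
  assumes psd: "hess_psd f p" and z: "cHess f p L L = 0"
  shows "cHess f p L V = 0"
proof -
  define H where "H U U' = cHess f p U U'" for U U'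
  have e1: "cHess f p (fst L + of_real s * fst V, snd L + of_real s * snd V) (fst L + of_real s * fst V, snd L + of_real s * snd V)
     = of_real s * (H L V + H V L) + of_real (s^2) * H V V" for s
    unfolding sesq_expand H_def z by (simp add: algebra_simps power2_eq_square)
  have e2: "cHess f p (fst L + (\<i> * of_real s) * fst V, snd L + (\<i> * of_real s) * snd V) (fst L + (\<i> * of_real s) * fst V, snd L + (\<i> * of_real s) * snd V)
     = of_real s * (- \<i> * H L V + \<i> * H V L) + of_real (s^2) * H V V" for s
    unfolding sesq_expand H_def z by (simp add: algebra_simps power2_eq_square)
  have z1: "H L V + H V L = 0"
  proof (rule quadC[where E="H V V"])
    fix s :: real
    show "Im (of_real s * (H L V + H V L) + of_real (s^2) * H V V) = 0 \<and> 0 \<le> Re (of_real s * (H L V + H V L) + of_real (s^2) * H V V)"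
      using psd[unfolded hess_psd_def, rule_format, of "(fst L + of_real s * fst V, snd L + of_real s * snd V)"]
      unfolding e1 .
  qed
  have z2: "- \<i> * H L V + \<i> * H V L = 0"
  proof (rule quadC[where E="H V V"])
    fix s :: real
    show "Im (of_real s * (- \<i> * H L V + \<i> * H V L) + of_real (s^2) * H V V) = 0 \<and> 0 \<le> Re (of_real s * (- \<i> * H L V + \<i> * H V L) + of_real (s^2) * H V V)"
      using psd[unfolded hess_psd_def, rule_format, of "(fst L + (\<i> * of_real s) * fst V, snd L + (\<i> * of_real s) * snd V)"]
      unfolding e2 .
  qed
  from z1 z2 have "H L V = 0" by (simp add: algebra_simps)
  then show ?thesis by (simp add: H_def)
qed


lemma Dzbar_cnj: "f differentiable at p \<Longrightarrow> Dzbar (cf f) p = cnj (Dz (cf f) p)"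
  by (simp add: Dz_W Dzbar_W W_cf)
lemma Dwbar_cnj: "f differentiable at p \<Longrightarrow> Dwbar (cf f) p = cnj (Dw (cf f) p)"
  by (simp add: Dw_W Dwbar_W W_cf)

lemma onePlus:
  assumes "X differentiable at x"
  shows "(\<lambda>q. 1 + X q) differentiable at x" "frechet_derivative (\<lambda>q. 1 + X q) (at x) = frechet_derivative X (at x)"
proof -
  have h: "((\<lambda>q. 1 + X q) has_derivative (\<lambda>h. 0 + frechet_derivative X (at x) h)) (at x)"
    by (rule has_derivative_add[OF has_derivative_const iffD1[OF frechet_derivative_works assms]])
  then show "(\<lambda>q. 1 + X q) differentiable at x" using differentiable_def by blast
  show "frechet_derivative (\<lambda>q. 1 + X q) (at x) = frechet_derivative X (at x)"
    using frechet_derivative_at[OF h] by simp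
qed

lemma W_onePlus:
  assumes "X differentiable at x"
  shows "W a1 a2 s (cf (\<lambda>q. 1 + X q)) x = W a1 a2 s (cf X) x"
  using assms by (simp add: W_cf onePlus)

lemma grad_nz:
  assumes rd: "r differentiable at p" and nz: "frechet_derivative r (at p) \<noteq> (\<lambda>v. 0)"
  shows "(Dz (cf r) p, Dw (cf r) p) \<noteq> (0, 0)"
proof
  assume h: "(Dz (cf r) p, Dw (cf r) p) = (0, 0)"
  define R where "R = frechet_derivative r (at p)"
  have bl: "bounded_linear R" unfolding R_def
    using has_derivative_bounded_linear iffD1[OF frechet_derivative_works rd] by blast
  have "Dz (cf r) p = 0" "Dw (cf r) p = 0" using h by auto
  then have z: "R (1,0) = 0" "R (\<i>,0) = 0" "R (0,1) = 0" "R (0,\<i>) = 0"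
    unfolding Dz_W Dw_W W_cf[OF rd] R_def[symmetric] by (auto simp: complex_eq_iff)
  have "R v = 0" for v
  proof -
    have v: "v = (Re (fst v) *\<^sub>R (1,0) + Im (fst v) *\<^sub>R (\<i>,0)) + (Re (snd v) *\<^sub>R (0,1) + Im (snd v) *\<^sub>R (0,\<i>))"
      by (simp add: prod_eq_iff complex_eq_iff)
    have "R v = R ((Re (fst v) *\<^sub>R (1,0) + Im (fst v) *\<^sub>R (\<i>,0)) + (Re (snd v) *\<^sub>R (0,1) + Im (snd v) *\<^sub>R (0,\<i>)))"
      by (rule arg_cong[where f=R, OF v])
    also have "\<dots> = (Re (fst v) *\<^sub>R R (1,0) + Im (fst v) *\<^sub>R R (\<i>,0)) + (Re (snd v) *\<^sub>R R (0,1) + Im (snd v) *\<^sub>R R (0,\<i>))"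
      by (simp only: linear_add[OF bounded_linear.linear[OF bl]] linear_scale[OF bounded_linear.linear[OF bl]])
    finally show ?thesis using z by simp
  qed
  then show False using nz R_def by auto
qed


theorem lemma4p5:
  fixes r X :: "complex \<times> complex \<Rightarrow> real" and K :: real and p :: "complex \<times> complex"
  assumes r_smooth: "smooth r"
    and r_defining: "\<forall>q. r q = 0 \<longrightarrow> frechet_derivative r (at q) \<noteq> (\<lambda>v. 0)"
    and r_psh_bdry: "\<forall>q. r q = 0 \<longrightarrow> hess_psd r q"
    and X_smooth: "smooth X"
    and p_bdry: "r p = 0"
    and p_weak: "levi r p = 0"
    and rho_psd: "hess_psd (\<lambda>q. r q * (1 + K * r q + X q)) p"
  shows "BP r (\<lambda>q. 1 + X q) p = 0"
proof -
  define rho where "rho = (\<lambda>q. r q * (1 + K * r q + X q))"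
  have r1: "r differentiable at p" using smooth_C2(1)[OF r_smooth] by blast
  have X1: "X differentiable at p" using smooth_C2(1)[OF X_smooth] by blast
  define a where "a = Dz (cf r) p"
  define b where "b = Dw (cf r) p"
  define c where "c = Dz (cf X) p"
  define d where "d = Dw (cf X) p"
  have ra: "Dzbar (cf r) p = cnj a" using Dzbar_cnj[OF r1] a_def by simp
  have rb: "Dwbar (cf r) p = cnj b" using Dwbar_cnj[OF r1] b_def by simp
  have xc: "Dzbar (cf X) p = cnj c" using Dzbar_cnj[OF X1] c_def by simp
  have xd: "Dwbar (cf X) p = cnj d" using Dwbar_cnj[OF X1] d_def by simp
  note WR = WW_rho[OF r_smooth X_smooth p_bdry, of _ _ _ _ _ _ K, folded rho_def]
  have c11: "Dz (Dzbar (cf rho)) p = of_real (1 + X p) * Dz (Dzbar (cf r)) p + Dz (cf r) p * (of_real K * Dzbar (cf r) p + Dzbar (cf X) p) + Dzbar (cf r) p * (of_real K * Dz (cf r) p + Dz (cf X) p)"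
    unfolding Dz_W Dzbar_W by (rule WR)
  have c22: "Dw (Dwbar (cf rho)) p = of_real (1 + X p) * Dw (Dwbar (cf r)) p + Dw (cf r) p * (of_real K * Dwbar (cf r) p + Dwbar (cf X) p) + Dwbar (cf r) p * (of_real K * Dw (cf r) p + Dw (cf X) p)"
    unfolding Dw_W Dwbar_W by (rule WR)
  have c12: "Dz (Dwbar (cf rho)) p = of_real (1 + X p) * Dz (Dwbar (cf r)) p + Dz (cf r) p * (of_real K * Dwbar (cf r) p + Dwbar (cf X) p) + Dwbar (cf r) p * (of_real K * Dz (cf r) p + Dz (cf X) p)"
    unfolding Dz_W Dwbar_W by (rule WR)
  have c21: "Dzbar (Dw (cf rho)) p = of_real (1 + X p) * Dzbar (Dw (cf r)) p + Dzbar (cf r) p * (of_real K * Dw (cf r) p + Dw (cf X) p) + Dw (cf r) p * (of_real K * Dzbar (cf r) p + Dzbar (cf X) p)"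
    unfolding Dzbar_W Dw_W by (rule WR)
  have Hrho: "cHess rho p V U = of_real (1 + X p) * cHess r p V U
     + (a * fst V + b * snd V) * cnj (of_real K * (a * fst U + b * snd U) + c * fst U + d * snd U)
     + (of_real K * (a * fst V + b * snd V) + c * fst V + d * snd V) * cnj (a * fst U + b * snd U)" for V U
    unfolding cHess_def[of rho] c11 c22 c12 c21 ra rb xc xd
    unfolding cHess_def a_def[symmetric] b_def[symmetric] c_def[symmetric] d_def[symmetric]
    by (simp add: algebra_simps)
  have L: "Lvec r p = (b, - a)" by (simp add: Lvec_def a_def b_def)
  have HrL: "cHess r p (b, -a) U = 0" for U
    using psd_null[OF r_psh_bdry[rule_format, OF p_bdry] p_weak[unfolded levi_def]] L by simp
  have HrhoLL: "cHess rho p (b, -a) (b, -a) = 0"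
    unfolding Hrho HrL by (simp add: algebra_simps)
  have HrhoL: "cHess rho p (b, -a) U = 0" for U
    using psd_null[OF rho_psd[folded rho_def] HrhoLL] .
  have "cHess rho p (b, -a) (cnj a, cnj b) = (c * b - d * a) * cnj (a * cnj a + b * cnj b)"
    unfolding Hrho HrL by (simp add: algebra_simps)
  then have z: "(c * b - d * a) * cnj (a * cnj a + b * cnj b) = 0" using HrhoL by simp
  have ab: "(a, b) \<noteq> (0, 0)"
    using grad_nz[OF r1 r_defining[rule_format, OF p_bdry]] a_def b_def by simp
  have "a * cnj a + b * cnj b \<noteq> 0"
  proof
    assume "a * cnj a + b * cnj b = 0"
    moreover have "a * cnj a + b * cnj b = of_real ((cmod a)^2 + (cmod b)^2)"
      by (simp add: complex_norm_square[symmetric])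
    ultimately have "(cmod a)^2 + (cmod b)^2 = 0" by (metis of_real_eq_0_iff)
    then have "a = 0 \<and> b = 0" by (simp add: add_nonneg_eq_0_iff)
    then show False using ab by simp
  qed
  then have e: "c * b = d * a" using z by (simp add: mult.commute)
  have P1: "Dzbar (cf (\<lambda>q. 1 + X q)) p = cnj c" "Dwbar (cf (\<lambda>q. 1 + X q)) p = cnj d"
    "Dz (cf (\<lambda>q. 1 + X q)) p = c" "Dw (cf (\<lambda>q. 1 + X q)) p = d"
    using xc xd by (simp_all add: Dz_W Dzbar_W Dw_W Dwbar_W W_onePlus[OF X1] c_def d_def)
  show ?thesis
    unfolding BP_def P1 rb a_def[symmetric] b_def[symmetric] using alg[OF ab e] by simp
qed

end
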